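(* For every integer $\Delta\geq 3$ there exists $\alpha>0$ such that there are infinitely many trees $X$ with maximum degree $\Delta$ with the following property: for every tree $T$ with maximum degree less than $\Delta$, every $T$-partition of $X$ has width at least $|V(X)|^{\alpha}$. Moreover, if $\Delta=3$, then for every $\alpha\in(0,1)$ there are infinitely many trees $X$ with maximum degree $3$ with this property.
   Context: For a graph $G$ and a tree $T$, a $T$-partition of $G$ is a family $(V_x : x\in V(T))$ of pairwise disjoint subsets of $V(G)$ (some possibly empty) with union $V(G)$, indexed by the nodes of $T$, such that for every edge $vw$ of $G$, if $v\in V_x$ and $w\in V_y$ then $x=y$ or $xy\in E(T)$. The width of a $T$-partition is $\max\{|V_x| : x\in V(T)\}$. *)

theory Defs
  imports Complex_Main
begin

definition sgraph :: "'a set \<Rightarrow> 'a set set \<Rightarrow> bool" where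
  "sgraph V E \<longleftrightarrow> finite V \<and>
     (\<forall>e\<in>E. \<exists>u v. u \<noteq> v \<and> u \<in> V \<and> v \<in> V \<and> e = {u, v})"

definition degree :: "'a set \<Rightarrow> 'a set set \<Rightarrow> 'a \<Rightarrow> nat" where
  "degree V E v = card {u \<in> V. {u, v} \<in> E}"

definition max_degree :: "'a set \<Rightarrow> 'a set set \<Rightarrow> nat" where
  "max_degree V E = Max (degree V E ` V)"

definition walk :: "'a set \<Rightarrow> 'a set set \<Rightarrow> 'a list \<Rightarrow> bool" where
  "walk V E xs \<longleftrightarrow> xs \<noteq> [] \<and> set xs \<subseteq> V \<and>
     (\<forall>i. Suc i < length xs \<longrightarrow> {xs ! i, xs ! Suc i} \<in> E)"

definition connected_graph :: "'a set \<Rightarrow> 'a set set \<Rightarrow> bool" where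
  "connected_graph V E \<longleftrightarrow>
     (\<forall>u\<in>V. \<forall>v\<in>V. \<exists>xs. walk V E xs \<and> hd xs = u \<and> last xs = v)"

definition is_cycle :: "'a set \<Rightarrow> 'a set set \<Rightarrow> 'a list \<Rightarrow> bool" where
  "is_cycle V E xs \<longleftrightarrow> length xs \<ge> 3 \<and> distinct xs \<and> walk V E xs \<and>
     {last xs, hd xs} \<in> E"

definition acyclic_graph :: "'a set \<Rightarrow> 'a set set \<Rightarrow> bool" where
  "acyclic_graph V E \<longleftrightarrow> (\<nexists>xs. is_cycle V E xs)"

definition is_tree :: "'a set \<Rightarrow> 'a set set \<Rightarrow> bool" where
  "is_tree V E \<longleftrightarrow> sgraph V E \<and> V \<noteq> {} \<and> connected_graph V E \<and> acyclic_graph V E"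

definition is_T_partition ::
  "'a set \<Rightarrow> 'a set set \<Rightarrow> 'b set \<Rightarrow> 'b set set \<Rightarrow> ('b \<Rightarrow> 'a set) \<Rightarrow> bool" where
  "is_T_partition VX EdX VT ET P \<longleftrightarrow>
     (\<forall>x\<in>VT. \<forall>y\<in>VT. x \<noteq> y \<longrightarrow> P x \<inter> P y = {}) \<and>
     (\<Union>x\<in>VT. P x) = VX \<and>
     (\<forall>v w x y. {v, w} \<in> EdX \<and> x \<in> VT \<and> y \<in> VT \<and> v \<in> P x \<and> w \<in> P y
        \<longrightarrow> x = y \<or> {x, y} \<in> ET)"

definition partition_width :: "'b set \<Rightarrow> ('b \<Rightarrow> 'a set) \<Rightarrow> nat" where
  "partition_width VT P = Max ((\<lambda>x. card (P x)) ` VT)"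

definition wide_for :: "nat \<Rightarrow> real \<Rightarrow> nat set \<Rightarrow> nat set set \<Rightarrow> bool" where
  "wide_for \<Delta> \<alpha> VX EdX \<longleftrightarrow>
     (\<forall>(VT :: nat set) ET P. is_tree VT ET \<and> (\<forall>x\<in>VT. degree VT ET x < \<Delta>) \<and>
        is_T_partition VX EdX VT ET P
        \<longrightarrow> real (partition_width VT P) \<ge> real (card VX) powr \<alpha>)"

end

theory Submission
  imports Defs
begin


lemma walk_single[simp]: "walk V E [a] \<longleftrightarrow> a \<in> V"
  by (auto simp: walk_def)

lemma walk_Cons2[simp]: "walk V E (a # b # xs) \<longleftrightarrow> a \<in> V \<and> {a,b} \<in> E \<and> walk V E (b # xs)"
proof
  assume h: "walk V E (a # b # xs)"
  have "\<forall>i. Suc i < length (b#xs) \<longrightarrow> {(b#xs) ! i, (b#xs) ! Suc i} \<in> E"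
  proof (intro allI impI)
    fix i assume "Suc i < length (b#xs)"
    then have "Suc (Suc i) < length (a#b#xs)" by simp
    with h have "{(a#b#xs) ! Suc i, (a#b#xs) ! Suc (Suc i)} \<in> E" unfolding walk_def by blast
    then show "{(b#xs) ! i, (b#xs) ! Suc i} \<in> E" by simp
  qed
  moreover have "{(a#b#xs) ! 0, (a#b#xs) ! Suc 0} \<in> E" using h unfolding walk_def by force
  ultimately show "a \<in> V \<and> {a,b} \<in> E \<and> walk V E (b # xs)" using h by (auto simp: walk_def)
next
  assume h: "a \<in> V \<and> {a,b} \<in> E \<and> walk V E (b # xs)"
  show "walk V E (a # b # xs)" unfolding walk_def
  proof (intro conjI allI impI)
    fix i assume i: "Suc i < length (a#b#xs)"
    show "{(a#b#xs) ! i, (a#b#xs) ! Suc i} \<in> E"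
    proof (cases i)
      case 0 then show ?thesis using h by simp
    next
      case (Suc j) then show ?thesis using h i unfolding walk_def by auto
    qed
  qed (use h in \<open>auto simp: walk_def\<close>)
qed

lemma walk_append: "walk V E xs \<Longrightarrow> walk V E ys \<Longrightarrow> last xs = hd ys \<Longrightarrow> walk V E (xs @ tl ys)"
proof (induction xs rule: induct_list012)
  case 1 then show ?case by (simp add: walk_def)
next
  case (2 x) then show ?case by (cases ys; cases "tl ys") auto
next
  case (3 x y zs) then show ?case by auto
qed

lemma walk_snoc: "walk V E xs \<Longrightarrow> v \<in> V \<Longrightarrow> {last xs, v} \<in> E \<Longrightarrow> walk V E (xs @ [v])"
proof -
  assume a: "walk V E xs" "v \<in> V" "{last xs, v} \<in> E"
  have "last xs \<in> V" using a(1) by (auto simp: walk_def)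
  then have "walk V E [last xs, v]" using a by simp
  from walk_append[OF a(1) this] show ?thesis by simp
qed

lemma no_cycle:
  fixes E :: "nat set set"
  assumes up: "\<And>a b. {a,b} \<in> E \<Longrightarrow> a < b \<Longrightarrow> a = f b"
  shows "\<not> is_cycle V E xs"
proof
  assume c: "is_cycle V E xs"
  let ?L = "length xs"
  have L: "?L \<ge> 3" and dis: "distinct xs" and w: "walk V E xs" and cl: "{last xs, hd xs} \<in> E"
    using c by (auto simp: is_cycle_def)
  have ne: "xs \<noteq> []" using L by auto
  define m where "m = Max (set xs)"
  have "m \<in> set xs" unfolding m_def using ne by simp
  then obtain i where i: "i < ?L" "xs ! i = m" by (auto simp: in_set_conv_nth)
  have adj: "\<And>i. Suc i < ?L \<Longrightarrow> {xs ! i, xs ! Suc i} \<in> E" using w by (auto simp: walk_def)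
  have key: "\<And>j. j < ?L \<Longrightarrow> j \<noteq> i \<Longrightarrow> {xs ! j, m} \<in> E \<Longrightarrow> xs ! j = f m"
  proof -
    fix j assume j: "j < ?L" "j \<noteq> i" "{xs ! j, m} \<in> E"
    have "xs ! j \<noteq> m" using dis j i nth_eq_iff_index_eq by metis
    moreover have "xs ! j \<le> m" unfolding m_def using j(1) by simp
    ultimately show "xs ! j = f m" using up j(3) by simp
  qed
  have "\<exists>j1 j2. j1 < ?L \<and> j2 < ?L \<and> j1 \<noteq> j2 \<and> j1 \<noteq> i \<and> j2 \<noteq> i \<and> {xs ! j1, m} \<in> E \<and> {xs ! j2, m} \<in> E"
  proof (cases "i = 0")
    case True
    have "{xs ! 0, xs ! 1} \<in> E" using adj[of 0] L by simp
    moreover have "last xs = xs ! (?L - 1)" using ne by (simp add: last_conv_nth)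
    moreover have "hd xs = xs ! 0" using ne by (simp add: hd_conv_nth)
    ultimately show ?thesis using True i cl L
      by (intro exI[of _ 1] exI[of _ "?L - 1"]) (auto simp: insert_commute)
  next
    case False
    show ?thesis
    proof (cases "i = ?L - 1")
      case True
      have "{xs ! (?L - 2), xs ! Suc (?L - 2)} \<in> E" using adj[of "?L - 2"] L by simp
      moreover have "Suc (?L - 2) = ?L - 1" using L by simp
      moreover have "last xs = xs ! (?L - 1)" using ne by (simp add: last_conv_nth)
      moreover have "hd xs = xs ! 0" using ne by (simp add: hd_conv_nth)
      ultimately show ?thesis using True i cl L
        by (intro exI[of _ "?L - 2"] exI[of _ 0]) (auto simp: insert_commute)
    next
      case F2: False
      have "{xs ! (i - 1), xs ! Suc (i - 1)} \<in> E" using adj[of "i - 1"] i False by simp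
      moreover have "Suc (i - 1) = i" using False by simp
      moreover have "{xs ! i, xs ! Suc i} \<in> E" using adj[of i] i F2 by simp
      ultimately show ?thesis using False F2 i
        by (intro exI[of _ "i - 1"] exI[of _ "Suc i"]) (auto simp: insert_commute)
    qed
  qed
  then obtain j1 j2 where "j1 < ?L" "j2 < ?L" "j1 \<noteq> j2" "j1 \<noteq> i" "j2 \<noteq> i" "{xs ! j1, m} \<in> E" "{xs ! j2, m} \<in> E"
    by blast
  then have "xs ! j1 = xs ! j2" using key by metis
  then show False using dis \<open>j1 < ?L\<close> \<open>j2 < ?L\<close> \<open>j1 \<noteq> j2\<close> nth_eq_iff_index_eq by metis
qed



definition par :: "nat \<Rightarrow> nat \<Rightarrow> nat" where "par k v = (v - 1) div k"
definition XE :: "nat \<Rightarrow> nat \<Rightarrow> nat set set" where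
  "XE k n = {{v, par k v} | v. 1 \<le> v \<and> v < n}"

lemma par_less: "k \<ge> 1 \<Longrightarrow> 1 \<le> v \<Longrightarrow> par k v < v"
  unfolding par_def by (metis diff_less div_le_dividend le_less_trans less_one not_le)

lemma XE_iff: "k \<ge> 1 \<Longrightarrow> {a,b} \<in> XE k n \<longleftrightarrow> (1 \<le> a \<and> a < n \<and> b = par k a) \<or> (1 \<le> b \<and> b < n \<and> a = par k b)"
  unfolding XE_def by (auto simp: doubleton_eq_iff)

lemma XE_up: "k \<ge> 1 \<Longrightarrow> {a,b} \<in> XE k n \<Longrightarrow> a < b \<Longrightarrow> a = par k b"
proof -
  assume k: "k \<ge> 1" and e: "{a,b} \<in> XE k n" and ab: "a < b"
  show ?thesis
  proof (rule ccontr)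
    assume "a \<noteq> par k b"
    then have "1 \<le> a" "b = par k a" using e XE_iff[OF k] by auto
    then show False using par_less[OF k] ab by fastforce
  qed
qed

lemma X_sgraph: "k \<ge> 1 \<Longrightarrow> sgraph {0..<n} (XE k n)"
  unfolding sgraph_def XE_def
proof (intro conjI ballI)
  fix e assume k: "k \<ge> 1" and "e \<in> {{v, par k v} |v. 1 \<le> v \<and> v < n}"
  then obtain v where v: "e = {v, par k v}" "1 \<le> v" "v < n" by blast
  have "par k v < v" using par_less k v by simp
  then show "\<exists>u v. u \<noteq> v \<and> u \<in> {0..<n} \<and> v \<in> {0..<n} \<and> e = {u, v}"
    using v by (intro exI[of _ v] exI[of _ "par k v"]) auto
qed simp

lemma walk_to0: "k \<ge> 1 \<Longrightarrow> v < n \<Longrightarrow> \<exists>xs. walk {0..<n} (XE k n) xs \<and> hd xs = v \<and> last xs = 0"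
proof (induction v rule: less_induct)
  case (less v)
  show ?case
  proof (cases "v = 0")
    case True then show ?thesis using less by (intro exI[of _ "[0]"]) auto
  next
    case False
    then have p: "par k v < v" using par_less less by simp
    with less obtain xs where xs: "walk {0..<n} (XE k n) xs" "hd xs = par k v" "last xs = 0" by force
    have ne: "xs \<noteq> []" using xs by (simp add: walk_def)
    then obtain ys where ys: "xs = par k v # ys" using xs(2) by (cases xs) auto
    have "{v, par k v} \<in> XE k n" using False less unfolding XE_def by auto
    then have "walk {0..<n} (XE k n) (v # xs)" using xs ys less by simp
    then show ?thesis using xs ne by (intro exI[of _ "v # xs"]) auto
  qed
qed

lemma walk_from0: "k \<ge> 1 \<Longrightarrow> v < n \<Longrightarrow> \<exists>xs. walk {0..<n} (XE k n) xs \<and> hd xs = 0 \<and> last xs = v"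
proof (induction v rule: less_induct)
  case (less v)
  show ?case
  proof (cases "v = 0")
    case True then show ?thesis using less by (intro exI[of _ "[0]"]) auto
  next
    case False
    then have p: "par k v < v" using par_less less by simp
    with less obtain xs where xs: "walk {0..<n} (XE k n) xs" "hd xs = 0" "last xs = par k v" by force
    have ne: "xs \<noteq> []" using xs by (simp add: walk_def)
    have "{par k v, v} \<in> XE k n" using False less unfolding XE_def by (auto simp: insert_commute)
    then have "walk {0..<n} (XE k n) (xs @ [v])" using xs less walk_snoc by fastforce
    then show ?thesis using xs ne by (intro exI[of _ "xs @ [v]"]) auto
  qed
qed

lemma X_tree: "k \<ge> 1 \<Longrightarrow> n \<ge> 1 \<Longrightarrow> is_tree {0..<n} (XE k n)"
  unfolding is_tree_def
proof (intro conjI)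
  assume k: "k \<ge> 1" and n: "n \<ge> 1"
  show "sgraph {0..<n} (XE k n)" using X_sgraph k .
  show "{0..<n} \<noteq> {}" using n by auto
  show "acyclic_graph {0..<n} (XE k n)" unfolding acyclic_graph_def
    using no_cycle[of "XE k n" "par k"] XE_up[OF k] by blast
  show "connected_graph {0..<n} (XE k n)" unfolding connected_graph_def
  proof (intro ballI)
    fix u v assume uv: "u \<in> {0..<n}" "v \<in> {0..<n}"
    obtain xs where xs: "walk {0..<n} (XE k n) xs" "hd xs = u" "last xs = 0" using walk_to0 k uv by force
    obtain ys where ys: "walk {0..<n} (XE k n) ys" "hd ys = 0" "last ys = v" using walk_from0 k uv by force
    have w: "walk {0..<n} (XE k n) (xs @ tl ys)" using walk_append[OF xs(1) ys(1)] xs ys by simp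
    have "xs \<noteq> []" "ys \<noteq> []" using xs ys by (auto simp: walk_def)
    then have "hd (xs @ tl ys) = u" using xs by simp
    moreover have "last (xs @ tl ys) = v"
    proof (cases "tl ys = []")
      case True
      then have "ys = [hd ys]" using \<open>ys \<noteq> []\<close> by (cases ys) auto
      then show ?thesis using True xs ys by (metis append_Nil2 last_ConsL)
    next
      case False
      then show ?thesis using ys \<open>ys \<noteq> []\<close> by (simp add: last_tl)
    qed
    ultimately show "\<exists>xs. walk {0..<n} (XE k n) xs \<and> hd xs = u \<and> last xs = v" using w by blast
  qed
qed

lemma nbrs_sub: "k \<ge> 1 \<Longrightarrow> {u \<in> {0..<n}. {u, v} \<in> XE k n} \<subseteq> insert (par k v) {k*v+1..k*v+k}"
proof
  fix u assume k: "k \<ge> 1" and u: "u \<in> {u \<in> {0..<n}. {u, v} \<in> XE k n}"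
  then have "(1 \<le> u \<and> v = par k u) \<or> u = par k v" using XE_iff[OF k] by blast
  moreover have "1 \<le> u \<Longrightarrow> v = par k u \<Longrightarrow> k*v+1 \<le> u \<and> u \<le> k*v+k"
  proof -
    assume a: "1 \<le> u" "v = par k u"
    have "k * v + (u-1) mod k = u - 1" using a unfolding par_def by (simp add: mult_div_mod_eq)
    moreover have "(u-1) mod k < k" using k by simp
    ultimately show ?thesis using a(1) by linarith
  qed
  ultimately show "u \<in> insert (par k v) {k*v+1..k*v+k}" by auto
qed

lemma deg_le: "k \<ge> 1 \<Longrightarrow> degree {0..<n} (XE k n) v \<le> k + 1"
proof -
  assume k: "k \<ge> 1"
  have "degree {0..<n} (XE k n) v \<le> card (insert (par k v) {k*v+1..k*v+k})"
    unfolding degree_def by (rule card_mono[OF _ nbrs_sub[OF k]]) simp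
  also have "\<dots> \<le> Suc (card {k*v+1..k*v+k})" by (rule card_insert_le_m1) auto
  finally show ?thesis by simp
qed

lemma deg_1: "k \<ge> 1 \<Longrightarrow> 2*k < n \<Longrightarrow> degree {0..<n} (XE k n) 1 \<ge> k + 1"
proof -
  assume k: "k \<ge> 1" and n: "2*k < n"
  have sub: "insert 0 {k+1..2*k} \<subseteq> {u \<in> {0..<n}. {u, 1} \<in> XE k n}"
  proof
    fix u assume u: "u \<in> insert 0 {k+1..2*k}"
    show "u \<in> {u \<in> {0..<n}. {u, 1} \<in> XE k n}"
    proof (cases "u = 0")
      case True then show ?thesis using XE_iff[OF k] n k by (auto simp: par_def)
    next
      case False
      then have "k \<le> u - 1" "u - 1 < 2 * k" using u k by auto
      then have "par k u = 1" unfolding par_def by (intro div_nat_eqI) auto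
      then show ?thesis using XE_iff[OF k] u n False by auto
    qed
  qed
  have "card (insert 0 {k+1..2*k}) = k + 1" by simp
  moreover have "card (insert 0 {k+1..2*k}) \<le> card {u \<in> {0..<n}. {u, 1} \<in> XE k n}"
    by (rule card_mono[OF _ sub]) simp
  ultimately show ?thesis unfolding degree_def by simp
qed

lemma X_maxdeg: "k \<ge> 1 \<Longrightarrow> 2*k < n \<Longrightarrow> max_degree {0..<n} (XE k n) = k + 1"
proof -
  assume k: "k \<ge> 1" and n: "2*k < n"
  have "1 \<in> {0..<n}" using n k by auto
  then show ?thesis unfolding max_degree_def using deg_le[OF k] deg_1[OF k n]
  proof (intro antisym)
    show "Max (degree {0..<n} (XE k n) ` {0..<n}) \<le> k + 1" using deg_le[OF k] \<open>1 \<in> {0..<n}\<close> by (intro Max.boundedI) auto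
    show "k + 1 \<le> Max (degree {0..<n} (XE k n) ` {0..<n})"
      using deg_1[OF k n] \<open>1 \<in> {0..<n}\<close> by (meson Max_ge finite_atLeastLessThan finite_imageI image_eqI le_trans)
  qed
qed



fun Rset :: "'b set \<Rightarrow> 'b set set \<Rightarrow> 'b \<Rightarrow> nat \<Rightarrow> 'b set" where
  "Rset VT ET x0 0 = {x0}"
| "Rset VT ET x0 (Suc j) = Rset VT ET x0 j \<union> {y \<in> VT. \<exists>x\<in>Rset VT ET x0 j. {x,y} \<in> ET}"

lemma R_sub: "x0 \<in> VT \<Longrightarrow> Rset VT ET x0 j \<subseteq> VT"
  by (induction j) auto

lemma R_fin: "finite VT \<Longrightarrow> x0 \<in> VT \<Longrightarrow> finite (Rset VT ET x0 j)"
  using R_sub finite_subset by metis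

lemma nbr_card:
  assumes "finite VT" "\<forall>x\<in>VT. degree VT ET x \<le> k" "x \<in> VT"
  shows "card {u \<in> VT. {u,x} \<in> ET} \<le> k"
  using assms unfolding degree_def by auto

lemma D0:
  assumes fin: "finite VT" and deg: "\<forall>x\<in>VT. degree VT ET x \<le> k" and x0: "x0 \<in> VT"
  shows "card (Rset VT ET x0 (Suc 0) - Rset VT ET x0 0) \<le> k"
proof -
  have "Rset VT ET x0 (Suc 0) - Rset VT ET x0 0 \<subseteq> {u \<in> VT. {u,x0} \<in> ET}"
    by (auto simp: insert_commute)
  then have "card (Rset VT ET x0 (Suc 0) - Rset VT ET x0 0) \<le> card {u \<in> VT. {u,x0} \<in> ET}"
    using fin by (intro card_mono) auto
  also have "\<dots> \<le> k" using nbr_card[OF fin deg x0] .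
  finally show ?thesis .
qed

lemma DS:
  assumes fin: "finite VT" and deg: "\<forall>x\<in>VT. degree VT ET x \<le> k" and x0: "x0 \<in> VT"
  shows "card (Rset VT ET x0 (Suc (Suc j)) - Rset VT ET x0 (Suc j))
           \<le> (k - 1) * card (Rset VT ET x0 (Suc j) - Rset VT ET x0 j)"
proof -
  let ?R = "Rset VT ET x0"
  let ?D = "?R (Suc j) - ?R j"
  let ?N = "\<lambda>x. {u \<in> VT. {u,x} \<in> ET} - ?R (Suc j)"
  have sub: "?R (Suc (Suc j)) - ?R (Suc j) \<subseteq> (\<Union>x\<in>?D. ?N x)"
  proof
    fix y assume y: "y \<in> ?R (Suc (Suc j)) - ?R (Suc j)"
    then obtain x where x: "x \<in> ?R (Suc j)" "{x,y} \<in> ET" "y \<in> VT" by auto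
    have "x \<notin> ?R j" using x y by auto
    then show "y \<in> (\<Union>x\<in>?D. ?N x)" using x y by (auto simp: insert_commute)
  qed
  have each: "card (?N x) \<le> k - 1" if xD: "x \<in> ?D" for x
  proof -
    obtain z where z: "z \<in> ?R j" "{z,x} \<in> ET" and xV: "x \<in> VT" using xD by auto
    have zV: "z \<in> VT" using z R_sub[OF x0] by auto
    have "?N x \<subseteq> {u \<in> VT. {u,x} \<in> ET} - {z}" using z by auto
    then have "card (?N x) \<le> card ({u \<in> VT. {u,x} \<in> ET} - {z})" using fin by (intro card_mono) auto
    also have "\<dots> = card {u \<in> VT. {u,x} \<in> ET} - 1" using z zV fin by (subst card_Diff_singleton) auto
    also have "\<dots> \<le> k - 1" using nbr_card[OF fin deg xV] by simp
    finally show ?thesis .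
  qed
  have "card (?R (Suc (Suc j)) - ?R (Suc j)) \<le> card (\<Union>x\<in>?D. ?N x)"
  proof (rule card_mono[OF _ sub])
    have "(\<Union>x\<in>?D. ?N x) \<subseteq> VT" by auto
    then show "finite (\<Union>x\<in>?D. ?N x)" using fin finite_subset by blast
  qed
  also have "\<dots> \<le> (\<Sum>x\<in>?D. card (?N x))" by (rule card_UN_le, rule finite_Diff, rule R_fin[OF fin x0])
  also have "\<dots> \<le> (\<Sum>x\<in>?D. k - 1)" using each by (rule sum_mono)
  also have "\<dots> = (k - 1) * card ?D" by simp
  finally show ?thesis .
qed

lemma Dbound:
  assumes fin: "finite VT" and deg: "\<forall>x\<in>VT. degree VT ET x \<le> k" and x0: "x0 \<in> VT" and k: "k \<ge> 2"
  shows "card (Rset VT ET x0 (Suc j) - Rset VT ET x0 j) \<le> k * (k - 1) ^ j"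
proof (induction j)
  case 0 then show ?case using D0[OF fin deg x0] by simp
next
  case (Suc j)
  have "card (Rset VT ET x0 (Suc (Suc j)) - Rset VT ET x0 (Suc j))
           \<le> (k - 1) * card (Rset VT ET x0 (Suc j) - Rset VT ET x0 j)" by (rule DS[OF fin deg x0])
  also have "\<dots> \<le> (k - 1) * (k * (k - 1) ^ j)" using Suc by simp
  finally show ?case by (simp add: algebra_simps)
qed

lemma Rbound:
  assumes fin: "finite VT" and deg: "\<forall>x\<in>VT. degree VT ET x \<le> k" and x0: "x0 \<in> VT" and k: "k \<ge> 2"
  shows "card (Rset VT ET x0 j) \<le> (j + 1) * k * (k - 1) ^ j"
proof (induction j)
  case 0 then show ?case using k by simp
next
  case (Suc j)
  let ?R = "Rset VT ET x0"
  have "?R j \<subseteq> ?R (Suc j)" by auto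
  then have "card (?R (Suc j)) = card (?R j) + card (?R (Suc j) - ?R j)"
    using R_fin[OF fin x0] by (metis card_Diff_subset card_mono le_add_diff_inverse)
  also have "\<dots> \<le> (j + 1) * k * (k - 1) ^ j + k * (k - 1) ^ j" using Suc Dbound[OF assms] by (intro add_mono)
  also have "\<dots> = (j + 2) * k * (k - 1) ^ j" by (simp add: algebra_simps)
  also have "\<dots> \<le> (j + 2) * k * (k - 1) ^ Suc j"
    using k by (intro mult_le_mono2 power_increasing) auto
  finally show ?case by simp
qed



lemma x0_in_R: "x0 \<in> Rset VT ET x0 j"
  by (induction j) auto

lemma part_bound:
  assumes k: "k \<ge> 2" and tree: "is_tree VT ET" and deg: "\<forall>x\<in>VT. degree VT ET x < k + 1"
    and P: "is_T_partition {0..<k^d} (XE k (k^d)) VT ET P"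
  shows "k^d \<le> (d+1)*k*(k-1)^d * partition_width VT P"
proof -
  let ?n = "k^d"
  have fin: "finite VT" and ne: "VT \<noteq> {}" using tree by (auto simp: is_tree_def sgraph_def)
  have deg': "\<forall>x\<in>VT. degree VT ET x \<le> k" using deg by auto
  have disj: "\<forall>x\<in>VT. \<forall>y\<in>VT. x \<noteq> y \<longrightarrow> P x \<inter> P y = {}"
    and un: "(\<Union>x\<in>VT. P x) = {0..<?n}"
    and ed: "\<And>v w x y. {v, w} \<in> XE k ?n \<Longrightarrow> x \<in> VT \<Longrightarrow> y \<in> VT \<Longrightarrow> v \<in> P x \<Longrightarrow> w \<in> P y \<Longrightarrow> x = y \<or> {x, y} \<in> ET"
    using P unfolding is_T_partition_def by blast+
  define nd where "nd v = (SOME x. x \<in> VT \<and> v \<in> P x)" for v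
  have nd: "nd v \<in> VT \<and> v \<in> P (nd v)" if "v < ?n" for v
  proof -
    have "\<exists>x. x \<in> VT \<and> v \<in> P x" using that un by auto
    then show ?thesis unfolding nd_def by (rule someI_ex)
  qed
  have npos: "0 < ?n" using k by simp
  define x0 where "x0 = nd 0"
  have x0: "x0 \<in> VT" using nd[OF npos] x0_def by simp
  let ?R = "Rset VT ET x0"
  have claim: "\<forall>v < k^j. nd v \<in> ?R j" if "j \<le> d" for j
    using that
  proof (induction j)
    case 0 then show ?case using x0_def by simp
  next
    case (Suc j)
    show ?case
    proof (intro allI impI)
      fix v assume v: "v < k ^ Suc j"
      have vn: "v < ?n" using v Suc.prems k
        by (meson less_le_trans one_le_numeral order.trans power_increasing)
      show "nd v \<in> ?R (Suc j)"
      proof (cases "v = 0")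
        case True then show ?thesis using x0_in_R x0_def by (metis Rset.simps(2) UnI1)
      next
        case False
        have "v - 1 < k * k ^ j" using v by simp
        then have pj: "par k v < k ^ j" unfolding par_def using k
          by (simp add: div_less_iff_less_mult mult.commute)
        then have pR: "nd (par k v) \<in> ?R j" using Suc by simp
        have pn: "par k v < ?n" using pj vn par_less[of k v] False k by simp
        have e: "{v, par k v} \<in> XE k ?n" using False vn unfolding XE_def by auto
        have "nd v = nd (par k v) \<or> {nd v, nd (par k v)} \<in> ET"
          using ed[OF e] nd[OF vn] nd[OF pn] by blast
        then show ?thesis
        proof
          assume "{nd v, nd (par k v)} \<in> ET"
          then have "{nd (par k v), nd v} \<in> ET" by (simp add: insert_commute)
          then show ?thesis using pR nd[OF vn] by auto
        qed (use pR in auto)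
      qed
    qed
  qed
  let ?w = "partition_width VT P"
  have wle: "card (P x) \<le> ?w" if "x \<in> VT" for x
    unfolding partition_width_def using fin that by (intro Max_ge) auto
  have Rsub: "?R d \<subseteq> VT" by (rule R_sub[OF x0])
  have cover: "{0..<?n} \<subseteq> (\<Union>x\<in>?R d. P x)" using claim[of d] nd by fastforce
  have "?n = card {0..<?n}" by simp
  also have "\<dots> \<le> card (\<Union>x\<in>?R d. P x)"
  proof (rule card_mono[OF _ cover])
    have "(\<Union>x\<in>?R d. P x) \<subseteq> {0..<?n}" using Rsub un by auto
    then show "finite (\<Union>x\<in>?R d. P x)" using finite_subset by blast
  qed
  also have "\<dots> \<le> (\<Sum>x\<in>?R d. card (P x))" by (rule card_UN_le, rule R_fin[OF fin x0])
  also have "\<dots> \<le> (\<Sum>x\<in>?R d. ?w)" using wle Rsub by (intro sum_mono) auto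
  also have "\<dots> = card (?R d) * ?w" by simp
  also have "\<dots> \<le> (d+1)*k*(k-1)^d * ?w" using Rbound[OF fin deg' x0 k] by (intro mult_le_mono1)
  finally show ?thesis .
qed



lemma exp_grow:
  fixes t c :: real and d :: nat
  assumes t: "t > 0" and c: "c \<ge> 0" and d: "real d \<ge> 8*c/t^2 + 2"
  shows "(real d + 1) * c \<le> exp (real d * t)"
proof -
  have nn: "8*c/t^2 \<ge> 0" using c by simp
  have d1: "real d \<ge> 1" using d nn by linarith
  have le: "8*c/t^2 \<le> real d" using d by linarith
  have t2: "t^2 > 0" using t by simp
  have "8*c \<le> real d * t^2" using le t2 by (simp add: pos_divide_le_eq)
  have e: "exp (real d * t) = exp (real d * t / 2) * exp (real d * t / 2)" by (simp flip: exp_add)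
  have "real d * t / 2 \<le> exp (real d * t / 2)" using exp_ge_add_one_self[of "real d * t / 2"] by linarith
  moreover have "0 \<le> real d * t / 2" using t by simp
  ultimately have "(real d * t / 2) * (real d * t / 2) \<le> exp (real d * t)" unfolding e
    by (intro mult_mono) auto
  moreover have "(real d + 1) * c \<le> (real d * t / 2) * (real d * t / 2)"
  proof -
    have "(real d + 1) * c \<le> 2 * real d * c" using d1 c mult_left_mono[of 1 "real d" c] by (simp add: algebra_simps)
    also have "\<dots> \<le> real d * (real d * t^2) / 4"
    proof -
      have "real d * (8*c) \<le> real d * (real d * t^2)" using \<open>8*c \<le> real d * t^2\<close> d1
        by (intro mult_left_mono) auto
      then show ?thesis by simp
    qed
    also have "\<dots> = (real d * t / 2) * (real d * t / 2)" by (simp add: power2_eq_square)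
    finally show ?thesis .
  qed
  ultimately show ?thesis by linarith
qed

lemma key_ineq:
  fixes K t \<alpha> :: real and d :: nat
  assumes K: "K \<ge> 2" and rel: "\<alpha> * ln K + t = ln K - ln (K - 1)"
    and g: "(real d + 1) * K \<le> exp (real d * t)"
  shows "(K ^ d) powr \<alpha> * ((real d + 1) * K * (K - 1) ^ d) \<le> K ^ d"
proof -
  have Kp: "K > 0" "K - 1 > 0" using K by auto
  have p: "(K ^ d) powr \<alpha> = exp (\<alpha> * (real d * ln K))"
    using Kp by (simp add: powr_def ln_realpow)
  have a: "(K - 1) ^ d = exp (real d * ln (K - 1))" using Kp by (simp add: exp_of_nat_mult)
  have b: "K ^ d = exp (real d * ln K)" using Kp by (simp add: exp_of_nat_mult)
  have "(K ^ d) powr \<alpha> * ((real d + 1) * K * (K - 1) ^ d)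
      = exp (\<alpha> * (real d * ln K)) * ((real d + 1) * K) * exp (real d * ln (K - 1))"
    unfolding p a by simp
  also have "\<dots> \<le> exp (\<alpha> * (real d * ln K)) * exp (real d * t) * exp (real d * ln (K - 1))"
    using g by (intro mult_right_mono mult_left_mono) auto
  also have "\<dots> = exp (real d * (\<alpha> * ln K + t + ln (K - 1)))" by (simp add: exp_add[symmetric] algebra_simps)
  also have "\<dots> = K ^ d" unfolding b rel by simp
  finally show ?thesis .
qed

lemma width_real:
  fixes n B w :: nat and \<alpha> :: real
  assumes "n \<le> B * w" "B > 0" "real n powr \<alpha> * real B \<le> real n"
  shows "real n powr \<alpha> \<le> real w"
proof -
  have "real n powr \<alpha> * real B \<le> real w * real B"
    using assms by (metis of_nat_le_iff of_nat_mult mult.commute order.trans)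
  then show ?thesis using assms(2) by simp
qed



lemma construct:
  assumes k: "k \<ge> 2" and t: "t > 0"
    and rel: "\<alpha> * ln (real k) + t = ln (real k) - ln (real k - 1)"
  shows "\<forall>N::nat. \<exists>(VX :: nat set) EdX. is_tree VX EdX \<and> max_degree VX EdX = k + 1 \<and>
                   card VX \<ge> N \<and> wide_for (k + 1) \<alpha> VX EdX"
proof
  fix N :: nat
  define d where "d = max (max 3 N) (nat \<lceil>8 * real k / t^2\<rceil> + 2)"
  have d3: "d \<ge> 3" and dN: "d \<ge> N" unfolding d_def by auto
  have dr: "real d \<ge> 8 * real k / t^2 + 2"
  proof -
    have "real (nat \<lceil>8 * real k / t^2\<rceil>) \<ge> 8 * real k / t^2" by linarith
    then show ?thesis unfolding d_def by linarith
  qed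
  have g: "(real d + 1) * real k \<le> exp (real d * t)" by (rule exp_grow[OF t _ dr]) simp
  let ?n = "k ^ d"
  have k1: "k \<ge> 1" using k by simp
  have n1: "?n \<ge> 1" using k by simp
  have "k ^ 3 \<le> ?n" using d3 k by (intro power_increasing) auto
  moreover have "2 * k < k ^ 3"
  proof -
    have "2 ^ 2 \<le> k ^ 2" using k by (intro power_mono) auto
    then have "4 * k \<le> k ^ 2 * k" by (intro mult_le_mono1) simp
    moreover have "k ^ 3 = k ^ 2 * k" by (simp add: power3_eq_cube power2_eq_square)
    ultimately show ?thesis using k by linarith
  qed
  ultimately have n2k: "2 * k < ?n" by linarith
  have "d < 2 ^ d" by (rule less_exp)
  also have "\<dots> \<le> ?n" using k by (intro power_mono) auto
  finally have cardN: "card {0..<?n} \<ge> N" using dN by simp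
  have wide: "wide_for (k + 1) \<alpha> {0..<?n} (XE k ?n)"
    unfolding wide_for_def
  proof (intro allI impI, elim conjE)
    fix VT :: "nat set" and ET P
    assume tr: "is_tree VT ET" and dg: "\<forall>x\<in>VT. degree VT ET x < k + 1"
      and P: "is_T_partition {0..<?n} (XE k ?n) VT ET P"
    let ?B = "(d+1)*k*(k-1)^d"
    have B: "?n \<le> ?B * partition_width VT P" by (rule part_bound[OF k tr dg P])
    have Bp: "?B > 0" using k by simp
    have rB: "real ?B = (real d + 1) * real k * (real k - 1) ^ d" using k1 by (simp add: of_nat_diff algebra_simps)
    have "(real k ^ d) powr \<alpha> * ((real d + 1) * real k * (real k - 1) ^ d) \<le> real k ^ d"
      by (rule key_ineq[OF _ rel g]) (use k in simp)
    then have "real ?n powr \<alpha> * real ?B \<le> real ?n" unfolding rB by simp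
    from width_real[OF B Bp this] show "real (card {0..<?n}) powr \<alpha> \<le> real (partition_width VT P)" by simp
  qed
  show "\<exists>(VX :: nat set) EdX. is_tree VX EdX \<and> max_degree VX EdX = k + 1 \<and>
                   card VX \<ge> N \<and> wide_for (k + 1) \<alpha> VX EdX"
    using X_tree[OF k1 n1] X_maxdeg[OF k1 n2k] cardN wide by blast
qed

theorem proposition4:
  shows "(\<forall>\<Delta>::nat. \<Delta> \<ge> 3 \<longrightarrow>
            (\<exists>\<alpha>::real. \<alpha> > 0 \<and>
               (\<forall>N::nat. \<exists>(VX :: nat set) EdX. is_tree VX EdX \<and> max_degree VX EdX = \<Delta> \<and>
                   card VX \<ge> N \<and> wide_for \<Delta> \<alpha> VX EdX))) \<and>
         (\<forall>\<alpha>::real. 0 < \<alpha> \<and> \<alpha> < 1 \<longrightarrow>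
               (\<forall>N::nat. \<exists>(VX :: nat set) EdX. is_tree VX EdX \<and> max_degree VX EdX = 3 \<and>
                   card VX \<ge> N \<and> wide_for 3 \<alpha> VX EdX))"
proof (intro conjI allI impI)
  fix \<Delta> :: nat assume D: "\<Delta> \<ge> 3"
  define k where "k = \<Delta> - 1"
  have k: "k \<ge> 2" and Dk: "\<Delta> = k + 1" using D unfolding k_def by auto
  define K where "K = real k"
  have K: "K \<ge> 2" using k unfolding K_def by simp
  define q where "q = ln (K / (K - 1))"
  have q: "q > 0" unfolding q_def using K by simp
  have lnK: "ln K > 0" using K by simp
  have qd: "q = ln K - ln (K - 1)" unfolding q_def using K by (simp add: ln_div)
  define \<alpha> where "\<alpha> = q / (2 * ln K)"
  have ap: "\<alpha> > 0" unfolding \<alpha>_def using q lnK by simp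
  have rel: "\<alpha> * ln (real k) + q / 2 = ln (real k) - ln (real k - 1)"
    unfolding \<alpha>_def using lnK qd K_def by simp
  have "\<forall>N::nat. \<exists>(VX :: nat set) EdX. is_tree VX EdX \<and> max_degree VX EdX = k + 1 \<and>
                   card VX \<ge> N \<and> wide_for (k + 1) \<alpha> VX EdX"
    by (rule construct[OF k _ rel]) (use q in simp)
  then show "\<exists>\<alpha>::real. \<alpha> > 0 \<and>
               (\<forall>N::nat. \<exists>(VX :: nat set) EdX. is_tree VX EdX \<and> max_degree VX EdX = \<Delta> \<and>
                   card VX \<ge> N \<and> wide_for \<Delta> \<alpha> VX EdX)" using ap Dk by blast
next
  fix \<alpha> :: real and N :: nat assume a: "0 < \<alpha> \<and> \<alpha> < 1"
  have rel: "\<alpha> * ln (real (2::nat)) + (1 - \<alpha>) * ln 2 = ln (real (2::nat)) - ln (real (2::nat) - 1)"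
    by (simp add: algebra_simps)
  have "\<forall>N::nat. \<exists>(VX :: nat set) EdX. is_tree VX EdX \<and> max_degree VX EdX = 2 + 1 \<and>
                   card VX \<ge> N \<and> wide_for (2 + 1) \<alpha> VX EdX"
    using construct[of 2 "(1 - \<alpha>) * ln 2" \<alpha>] rel a by simp
  then show "\<exists>(VX :: nat set) EdX. is_tree VX EdX \<and> max_degree VX EdX = 3 \<and>
                   card VX \<ge> N \<and> wide_for 3 \<alpha> VX EdX" by simp
qed

end
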